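(* Let $h:\mathbb R\to\mathbb R$ be twice differentiable and satisfy: (i) $h''$ has finitely many zeros $\xi_1,\dots,\xi_n$, each of order at most $q_1>0$. That is, for each $k$ there are $a_k>0$ and a neighborhood of $\xi_k$ on which $|h''(\xi)|\ge a_k|\xi-\xi_k|^{q_1}$. (ii) There are constants $C_1,C_2>0$ and $q_2\ge0$ such that $|h''(\xi)|\ge C_2|\xi|^{q_2}$ whenever $|\xi|\ge C_1$. Then there is a constant $C$ such that the (improper) integral satisfies $$\Big|\int_{\mathbb R}e^{ith(\xi)}\,d\xi\Big|\le Ct^{-1/(2+q_2)}\quad (0<t<1),\qquad \Big|\int_{\mathbb R}e^{ith(\xi)}\,d\xi\Big|\le Ct^{-1/(2+q_1)}\quad (t\ge1).$$ *)

theory Defs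
  imports "HOL-Analysis.Analysis"
begin

definition improper_integral_R :: "(real \<Rightarrow> complex) \<Rightarrow> complex \<Rightarrow> bool" where
  "improper_integral_R f L \<longleftrightarrow>
     (\<forall>a b. f integrable_on {a..b}) \<and>
     ((\<lambda>(a, b). integral {a..b} f) \<longlongrightarrow> L) (at_bot \<times>\<^sub>F at_top)"

end

theory Submission
  imports Defs
begin


lemma vdc1:
  fixes h h' h'' :: "real \<Rightarrow> real" and t \<delta> u v :: real
  assumes d1: "\<And>x. (h has_real_derivative h' x) (at x)"
    and d2: "\<And>x. (h' has_real_derivative h'' x) (at x)"
    and t: "t > 0" and \<delta>: "\<delta> > 0" and uv: "u \<le> v"
    and pos: "\<And>x. x \<in> {u..v} \<Longrightarrow> h'' x \<ge> 0"
    and big: "\<And>x. x \<in> {u..v} \<Longrightarrow> \<delta> \<le> \<bar>h' x\<bar>"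
  shows "norm (integral {u..v} (\<lambda>x. cis (t * h x))) \<le> 4 / (t * \<delta>)"
proof -
  define c where "c = (\<lambda>x. cis (t * h x))"
  define G where "G = (\<lambda>x. c x * complex_of_real (1 / (t * h' x)) * (- \<i>))"
  define R where "R = (\<lambda>x. c x * complex_of_real (h'' x / (t * (h' x)^2)) * (- \<i>))"
  have nz: "h' x \<noteq> 0" if "x \<in> {u..v}" for x using big[OF that] \<delta> by auto
  have dc: "(c has_vector_derivative (\<i> * complex_of_real (t * h' x)) * c x) (at x)" for x
  proof -
    have "((\<lambda>x. \<i> * complex_of_real (t * h x)) has_vector_derivative \<i> * complex_of_real (t * h' x)) (at x)"
      by (intro derivative_intros DERIV_cmult d1)
    from field_vector_diff_chain_at[OF this DERIV_exp]
    show ?thesis unfolding c_def cis_conv_exp by (simp add: o_def)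
  qed
  have dinv: "((\<lambda>x. 1 / (t * h' x)) has_real_derivative (- h'' x / (t * (h' x)^2))) (at x)"
    if "x \<in> {u..v}" for x
  proof -
    have "((\<lambda>x. 1 / (t * h' x)) has_real_derivative (- (t * h'' x) / (t * h' x)^2)) (at x)"
      using nz[OF that] t by (auto intro!: derivative_eq_intros d2 simp: power2_eq_square)
    then show ?thesis using t nz[OF that] by (simp add: power2_eq_square field_simps)
  qed
  have dG: "(G has_vector_derivative (c x - R x)) (at x)" if "x \<in> {u..v}" for x
  proof -
    have m: "((\<lambda>x. c x * complex_of_real (1 / (t * h' x))) has_vector_derivative
       (c x * complex_of_real (- h'' x / (t * (h' x)^2)) + ((\<i> * complex_of_real (t * h' x)) * c x) * complex_of_real (1 / (t * h' x)))) (at x)"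
      by (intro has_vector_derivative_mult has_vector_derivative_of_real dc dinv that)
    have "(G has_vector_derivative
       ((\<i> * complex_of_real (t * h' x)) * c x) * complex_of_real (1 / (t * h' x)) * (- \<i>)
       + c x * complex_of_real (- h'' x / (t * (h' x)^2)) * (- \<i>)) (at x)"
      unfolding G_def using has_vector_derivative_mult_left[OF m, of "- \<i>"]
      by (simp add: algebra_simps)
    moreover have "(\<i> * complex_of_real (t * h' x)) * c x * complex_of_real (1 / (t * h' x)) * (- \<i>)
       + c x * complex_of_real (- h'' x / (t * (h' x)^2)) * (- \<i>) = c x - R x"
      using nz[OF that] t unfolding R_def
      by (simp add: field_simps of_real_divide)
    ultimately show ?thesis by simp
  qed
  have I1: "((\<lambda>x. c x - R x) has_integral (G v - G u)) {u..v}"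
    using dG uv by (intro fundamental_theorem_of_calculus) (auto intro: has_vector_derivative_at_within)
  have ch: "continuous_on {u..v} h"
    using DERIV_isCont[OF d1] by (intro continuous_at_imp_continuous_on) auto
  have contc: "continuous_on {u..v} c"
    unfolding c_def by (intro continuous_intros ch)
  have ic: "c integrable_on {u..v}" by (rule integrable_continuous_interval[OF contc])
  have iR: "R integrable_on {u..v}"
  proof -
    have "(\<lambda>x. c x - (c x - R x)) integrable_on {u..v}"
      using integrable_diff[OF ic has_integral_integrable[OF I1]] .
    then show ?thesis by simp
  qed
  have I2: "((\<lambda>x. h'' x / (t * (h' x)^2)) has_integral (1 / (t * h' u) - 1 / (t * h' v))) {u..v}"
  proof -
    have "((\<lambda>x. h'' x / (t * (h' x)^2)) has_integral ((\<lambda>x. - (1 / (t * h' x))) v - (\<lambda>x. - (1 / (t * h' x))) u)) {u..v}"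
    proof (rule fundamental_theorem_of_calculus[OF uv])
      fix x assume x: "x \<in> {u..v}"
      have "((\<lambda>x. - (1 / (t * h' x))) has_real_derivative - (- h'' x / (t * (h' x)^2))) (at x)"
        by (intro DERIV_minus dinv x)
      then show "((\<lambda>x. - (1 / (t * h' x))) has_vector_derivative h'' x / (t * (h' x)^2)) (at x within {u..v})"
        by (simp add: has_real_derivative_iff_has_vector_derivative has_vector_derivative_at_within)
    qed
    then show ?thesis by simp
  qed
  have nR: "norm (R x) \<le> h'' x / (t * (h' x)^2)" if "x \<in> {u..v}" for x
    using pos[OF that] t unfolding R_def c_def by (simp add: norm_mult norm_divide norm_power)
  have b1: "norm (integral {u..v} R) \<le> 1 / (t * h' u) - 1 / (t * h' v)"
    using integral_norm_bound_integral[OF iR _ nR] I2 by (metis has_integral_integrable integral_unique)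
  have b2: "\<bar>1 / (t * h' x)\<bar> \<le> 1 / (t * \<delta>)" if "x \<in> {u..v}" for x
    using big[OF that] t \<delta> by (simp add: abs_mult frac_le mult_left_mono)
  have eq: "integral {u..v} c = (G v - G u) + integral {u..v} R"
    using integral_unique[OF I1] integral_diff[OF ic iR] by (simp add: algebra_simps)
  have nG: "norm (G x) = \<bar>1 / (t * h' x)\<bar>" for x
    unfolding G_def c_def by (simp add: norm_mult norm_divide abs_mult)
  have b3: "1/(t*h' u) - 1/(t*h' v) \<le> 1/(t*\<delta>) + 1/(t*\<delta>)"
    using b2[of u] b2[of v] uv by (smt (verit) atLeastAtMost_iff)
  have "norm (integral {u..v} c) \<le> norm (G v) + norm (G u) + norm (integral {u..v} R)"
    unfolding eq by (metis norm_triangle_ineq4 norm_triangle_le add_mono order_refl)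
  also have "\<dots> \<le> 1 / (t * \<delta>) + 1 / (t * \<delta>) + (1 / (t * \<delta>) + 1 / (t * \<delta>))"
    using b1 b2[of u] b2[of v] b3 uv unfolding nG by (intro add_mono) auto
  finally show ?thesis unfolding c_def by (simp add: mult.commute)
qed



lemma piece:
  fixes h h' h'' :: "real \<Rightarrow> real" and t \<delta> a b L :: real
  assumes d1: "\<And>x. (h has_real_derivative h' x) (at x)"
    and d2: "\<And>x. (h' has_real_derivative h'' x) (at x)"
    and t: "t > 0" and \<delta>: "\<delta> > 0" and ab: "a \<le> b" and L: "L \<ge> 0"
    and pos: "\<And>x. x \<in> {a..b} \<Longrightarrow> h'' x \<ge> 0"
    and len: "\<And>x y. a \<le> x \<Longrightarrow> x \<le> y \<Longrightarrow> y \<le> b \<Longrightarrow> (\<forall>w\<in>{x..y}. \<bar>h' w\<bar> \<le> \<delta>) \<Longrightarrow> y - x \<le> L"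
  shows "norm (integral {a..b} (\<lambda>x. cis (t * h x))) \<le> 8 / (t * \<delta>) + L"
proof -
  have mono: "h' x \<le> h' y" if "a \<le> x" "x \<le> y" "y \<le> b" for x y
  proof (rule DERIV_nonneg_imp_nondecreasing[of x y h'])
    fix z assume "x \<le> z" "z \<le> y"
    then show "\<exists>y. (h' has_real_derivative y) (at z) \<and> 0 \<le> y"
      using that pos d2 by (intro exI[of _ "h'' z"]) auto
  qed (use that in auto)
  have ch': "continuous_on {x..y} h'" for x y
    using DERIV_isCont[OF d2] by (intro continuous_at_imp_continuous_on) auto
  have ch: "continuous_on {x..y} h" for x y
    using DERIV_isCont[OF d1] by (intro continuous_at_imp_continuous_on) auto
  have int: "(\<lambda>x. cis (t * h x)) integrable_on {x..y}" for x y
    by (intro integrable_continuous_interval continuous_intros ch)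
  have vd: "norm (integral {u..v} (\<lambda>x. cis (t * h x))) \<le> 4 / (t * \<delta>)"
    if "a \<le> u" "u \<le> v" "v \<le> b" "\<And>x. x \<in> {u..v} \<Longrightarrow> \<delta> \<le> \<bar>h' x\<bar>" for u v
    using that by (intro vdc1[OF d1 d2 t \<delta>]) (auto intro: pos)
  have pos8: "0 \<le> 4 / (t * \<delta>)" using t \<delta> by simp
  have le48: "4 / (t * \<delta>) \<le> 8 / (t * \<delta>)" using t \<delta> by (intro divide_right_mono) auto
  consider "h' b < - \<delta>" | "h' a > \<delta>" | "h' b \<ge> - \<delta>" "h' a \<le> \<delta>" by linarith
  then show ?thesis
  proof cases
    case 1
    have "norm (integral {a..b} (\<lambda>x. cis (t * h x))) \<le> 4 / (t * \<delta>)"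
      using 1 mono ab by (intro vd) force+
    then show ?thesis using L le48 by linarith
  next
    case 2
    have "norm (integral {a..b} (\<lambda>x. cis (t * h x))) \<le> 4 / (t * \<delta>)"
      using 2 mono ab by (intro vd) force+
    then show ?thesis using L le48 by linarith
  next
    case 3
    obtain c where c: "a \<le> c" "c \<le> b" "\<bar>h' c\<bar> \<le> \<delta>"
      "norm (integral {a..c} (\<lambda>x. cis (t * h x))) \<le> 4 / (t * \<delta>)"
    proof (cases "h' a \<ge> - \<delta>")
      case True
      then show ?thesis using that[of a] 3 ab pos8 by auto
    next
      case False
      obtain c where c: "a \<le> c" "c \<le> b" "h' c = - \<delta>"
        using IVT'[of h' a "-\<delta>" b, OF _ _ ab ch'] False 3 by auto
      have "norm (integral {a..c} (\<lambda>x. cis (t * h x))) \<le> 4 / (t * \<delta>)"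
        using c mono \<delta> by (intro vd) force+
      then show ?thesis using that[of c] c \<delta> by auto
    qed
    obtain d where d: "c \<le> d" "d \<le> b" "\<bar>h' d\<bar> \<le> \<delta>"
      "norm (integral {d..b} (\<lambda>x. cis (t * h x))) \<le> 4 / (t * \<delta>)"
    proof (cases "h' b \<le> \<delta>")
      case True
      then show ?thesis using that[of b] 3 c pos8 by auto
    next
      case False
      obtain d where d: "c \<le> d" "d \<le> b" "h' d = \<delta>"
        using IVT'[of h' c "\<delta>" b, OF _ _ _ ch'] False c by (auto simp: abs_le_iff)
      have "norm (integral {d..b} (\<lambda>x. cis (t * h x))) \<le> 4 / (t * \<delta>)"
      proof (rule vd)
        fix x assume x: "x \<in> {d..b}"
        then have "h' d \<le> h' x" using mono[of d x] c d by auto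
        then show "\<delta> \<le> \<bar>h' x\<bar>" using d by auto
      qed (use c d in auto)
      then show ?thesis using that[of d] d \<delta> by auto
    qed
    have mid: "\<forall>w\<in>{c..d}. \<bar>h' w\<bar> \<le> \<delta>"
    proof
      fix w assume w: "w \<in> {c..d}"
      have "h' c \<le> h' w" "h' w \<le> h' d" using mono w c d by auto
      then show "\<bar>h' w\<bar> \<le> \<delta>" using c d by auto
    qed
    have "d - c \<le> L" using len[OF c(1) d(1) d(2) mid] .
    have nm: "norm (integral {c..d} (\<lambda>x. cis (t * h x))) \<le> 1 * (d - c)"
      using d by (intro integral_bound continuous_intros ch) auto
    have "integral {a..b} (\<lambda>x. cis (t * h x)) = integral {a..c} (\<lambda>x. cis (t * h x)) + 
        (integral {c..d} (\<lambda>x. cis (t * h x)) + integral {d..b} (\<lambda>x. cis (t * h x)))"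
      using Henstock_Kurzweil_Integration.integral_combine[OF c(1) c(2) int] Henstock_Kurzweil_Integration.integral_combine[OF d(1) d(2) int] by simp
    then have "norm (integral {a..b} (\<lambda>x. cis (t * h x))) \<le> 4 / (t * \<delta>) + ((d - c) + 4 / (t * \<delta>))"
      by (metis c(4) d(4) nm mult_1 norm_triangle_le add_mono)
    then show ?thesis using \<open>d - c \<le> L\<close> by (simp add: mult.commute)
  qed
qed



lemma piece_neg:
  fixes h h' h'' :: "real \<Rightarrow> real" and t \<delta> a b L :: real
  assumes d1: "\<And>x. (h has_real_derivative h' x) (at x)"
    and d2: "\<And>x. (h' has_real_derivative h'' x) (at x)"
    and t: "t > 0" and \<delta>: "\<delta> > 0" and ab: "a \<le> b" and L: "L \<ge> 0"
    and neg: "\<And>x. x \<in> {a..b} \<Longrightarrow> h'' x \<le> 0"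
    and len: "\<And>x y. a \<le> x \<Longrightarrow> x \<le> y \<Longrightarrow> y \<le> b \<Longrightarrow> (\<forall>w\<in>{x..y}. \<bar>h' w\<bar> \<le> \<delta>) \<Longrightarrow> y - x \<le> L"
  shows "norm (integral {a..b} (\<lambda>x. cis (t * h x))) \<le> 8 / (t * \<delta>) + L"
proof -
  have "norm (integral {a..b} (\<lambda>x. cis (t * (- h x)))) \<le> 8 / (t * \<delta>) + L"
    by (rule piece[of "\<lambda>x. - h x" "\<lambda>x. - h' x" "\<lambda>x. - h'' x"])
      (use d1 d2 t \<delta> ab L neg len in \<open>auto intro: DERIV_minus\<close>)
  moreover have "integral {a..b} (\<lambda>x. cis (t * (- h x))) = cnj (integral {a..b} (\<lambda>x. cis (t * h x)))"
    by (simp add: integral_cnj cis_cnj)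
  ultimately show ?thesis by simp
qed

lemma darboux_aux:
  fixes f f' :: "real \<Rightarrow> real"
  assumes d: "\<And>x. (f has_real_derivative f' x) (at x)" and uv: "u < v"
    and fu: "f' u > 0" and fv: "f' v < 0"
  shows "\<exists>w. u < w \<and> w < v \<and> f' w = 0"
proof -
  have cont: "continuous_on {u..v} f"
    using DERIV_isCont[OF d] by (intro continuous_at_imp_continuous_on) auto
  obtain w where w: "w \<in> {u..v}" "\<forall>y\<in>{u..v}. f y \<le> f w"
    using continuous_attains_sup[OF compact_Icc _ cont] uv by auto
  obtain d1 where d1: "d1 > 0" "\<forall>h>0. h < d1 \<longrightarrow> f u < f (u + h)"
    using DERIV_pos_inc_right[OF d fu] by auto
  obtain d2 where d2: "d2 > 0" "\<forall>h>0. h < d2 \<longrightarrow> f v < f (v - h)"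
    using DERIV_neg_dec_left[OF d fv] by auto
  have wu: "w \<noteq> u"
  proof
    assume "w = u"
    define e where "e = min (d1/2) (v-u)"
    have "f u < f (u + e)" using d1 uv unfolding e_def by auto
    moreover have "f (u + e) \<le> f w" using w(2) uv d1 unfolding e_def by auto
    ultimately show False using \<open>w = u\<close> by simp
  qed
  have wv: "w \<noteq> v"
  proof
    assume "w = v"
    define e where "e = min (d2/2) (v-u)"
    have "f v < f (v - e)" using d2 uv unfolding e_def by auto
    moreover have "f (v - e) \<le> f w" using w(2) uv d2 unfolding e_def by auto
    ultimately show False using \<open>w = v\<close> by simp
  qed
  have "f' w = 0"
  proof (rule DERIV_local_max[OF d[of w], where d="min (w-u) (v-w)"])
    show "0 < min (w - u) (v - w)" using w wu wv by auto
    show "\<forall>y. \<bar>w - y\<bar> < min (w - u) (v - w) \<longrightarrow> f y \<le> f w"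
    proof (intro allI impI)
      fix y assume "\<bar>w - y\<bar> < min (w - u) (v - w)"
      then have "y \<in> {u..v}" by (auto simp: abs_less_iff)
      then show "f y \<le> f w" using w(2) by auto
    qed
  qed
  moreover have "u < w" "w < v" using w wu wv by auto
  ultimately show ?thesis by blast
qed

lemma darboux:
  fixes f f' :: "real \<Rightarrow> real"
  assumes d: "\<And>x. (f has_real_derivative f' x) (at x)" and uv: "u \<noteq> v"
    and s: "f' u * f' v < 0"
  shows "\<exists>w. min u v < w \<and> w < max u v \<and> f' w = 0"
proof -
  have dm: "\<And>x. ((\<lambda>x. - f x) has_real_derivative - f' x) (at x)" using d by (intro DERIV_minus)
  consider "u < v" "f' u > 0" "f' v < 0" | "u < v" "f' u < 0" "f' v > 0"
    | "v < u" "f' v > 0" "f' u < 0" | "v < u" "f' v < 0" "f' u > 0"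
    using uv s by (cases "u < v") (auto simp: mult_less_0_iff)
  then show ?thesis
  proof cases
    case 1 then show ?thesis using darboux_aux[OF d, of u v] by auto
  next
    case 2 then show ?thesis using darboux_aux[OF dm, of u v] by auto
  next
    case 3 then show ?thesis using darboux_aux[OF d, of v u] by auto
  next
    case 4 then show ?thesis using darboux_aux[OF dm, of v u] by auto
  qed
qed

lemma const_sign:
  fixes f f' :: "real \<Rightarrow> real" and S :: "real set"
  assumes d: "\<And>x. (f has_real_derivative f' x) (at x)"
    and conv: "\<And>x y z. x \<in> S \<Longrightarrow> z \<in> S \<Longrightarrow> x \<le> y \<Longrightarrow> y \<le> z \<Longrightarrow> y \<in> S"
    and nz: "\<And>x. x \<in> S \<Longrightarrow> f' x \<noteq> 0"
  shows "(\<forall>x\<in>S. f' x > 0) \<or> (\<forall>x\<in>S. f' x < 0)"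
proof (rule ccontr)
  assume "\<not> ?thesis"
  then obtain u v where uv: "u \<in> S" "v \<in> S" "f' u > 0" "f' v < 0"
    using nz by (meson linorder_neqE_linordered_idom)
  then have "u \<noteq> v" "f' u * f' v < 0" by (auto simp: mult_pos_neg)
  from darboux[OF d this] obtain w where w: "min u v < w" "w < max u v" "f' w = 0" by auto
  have "w \<in> S"
    using conv[where x=u and y=w and z=v] conv[where x=v and y=w and z=u] uv w by (cases "u < v") (auto simp: min_def max_def split: if_splits)
  then show False using nz w by auto
qed



lemma growth_pos:
  fixes F F' :: "real \<Rightarrow> real"
  assumes d: "\<And>y. (F has_real_derivative F' y) (at y)"
   and c: "c > 0" and C: "C > 0" and q: "q \<ge> 0"
   and g: "\<And>y. y \<ge> c \<Longrightarrow> F' y \<ge> C * y powr q"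
   and y: "y \<ge> c"
  shows "F y \<ge> F c + C/(1+q) * (y powr (1+q) - c powr (1+q))"
proof -
  define G where "G = (\<lambda>y. F y - C/(1+q) * y powr (1+q))"
  have "G c \<le> G y"
  proof (rule DERIV_nonneg_imp_nondecreasing[OF y])
    fix x assume x: "c \<le> x" "x \<le> y"
    then have xp: "x > 0" using c by auto
    have "(G has_real_derivative F' x - C/(1+q) * ((1+q) * x powr (1+q-1))) (at x)"
      unfolding G_def by (intro DERIV_diff d DERIV_cmult has_real_derivative_powr xp)
    moreover have "F' x - C/(1+q) * ((1+q) * x powr (1+q-1)) = F' x - C * x powr q"
      using q by simp
    moreover have "F' x - C * x powr q \<ge> 0" using g[of x] x by simp
    ultimately show "\<exists>y. (G has_real_derivative y) (at x) \<and> 0 \<le> y" by auto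
  qed
  then show ?thesis unfolding G_def by (simp add: algebra_simps)
qed

lemma growth_side:
  fixes F F' :: "real \<Rightarrow> real"
  assumes d: "\<And>y. (F has_real_derivative F' y) (at y)"
   and c: "c > 0" and C: "C > 0" and q: "q \<ge> 0"
   and g: "\<And>y. y \<ge> c \<Longrightarrow> \<bar>F' y\<bar> \<ge> C * y powr q"
   and y: "y \<ge> c"
  shows "\<bar>F y\<bar> \<ge> C/(1+q) * y powr (1+q) - (C/(1+q) * c powr (1+q) + \<bar>F c\<bar>)"
proof -
  have nz: "F' x \<noteq> 0" if "x \<in> {c..}" for x
  proof -
    have "C * x powr q > 0" using that c C by auto
    then show ?thesis using g[of x] that by auto
  qed
  have "(\<forall>x\<in>{c..}. F' x > 0) \<or> (\<forall>x\<in>{c..}. F' x < 0)"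
    by (rule const_sign[OF d _ nz]) auto
  then show ?thesis
  proof
    assume p: "\<forall>x\<in>{c..}. F' x > 0"
    have "F y \<ge> F c + C/(1+q) * (y powr (1+q) - c powr (1+q))"
    proof (rule growth_pos[OF d c C q _ y])
      fix x assume "x \<ge> c"
      then have "F' x > 0" using p by auto
      then show "C * x powr q \<le> F' x" using g[OF \<open>x \<ge> c\<close>] by auto
    qed
    moreover have "C/(1+q) * (y powr (1+q) - c powr (1+q)) = C/(1+q) * y powr (1+q) - C/(1+q) * c powr (1+q)"
      by (simp add: right_diff_distrib)
    ultimately show ?thesis using abs_ge_self[of "F y"] abs_ge_minus_self[of "F c"] by linarith
  next
    assume p: "\<forall>x\<in>{c..}. F' x < 0"
    have "- F y \<ge> - F c + C/(1+q) * (y powr (1+q) - c powr (1+q))"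
      by (rule growth_pos[of "\<lambda>x. - F x" "\<lambda>x. - F' x", OF _ c C q _ y])
        (use g p d in \<open>auto intro: DERIV_minus\<close>, smt (verit) atLeast_iff g p)
    moreover have "C/(1+q) * (y powr (1+q) - c powr (1+q)) = C/(1+q) * y powr (1+q) - C/(1+q) * c powr (1+q)"
      by (simp add: right_diff_distrib)
    ultimately show ?thesis using abs_ge_minus_self[of "F y"] abs_ge_self[of "F c"] by linarith
  qed
qed



lemma one_side_pos:
  fixes F F' :: "real \<Rightarrow> real"
  assumes d: "\<And>y. (F has_real_derivative F' y) (at y)"
   and a: "a > 0" and q: "q > 0"
   and g: "\<And>y. z < y \<Longrightarrow> y < z + \<rho> \<Longrightarrow> F' y \<ge> a * (y - z) powr q"
   and y: "z \<le> y" "y < z + \<rho>"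
  shows "F y - F z \<ge> a/(1+q) * (y - z) powr (1+q)"
proof -
  define G where "G = (\<lambda>u. F u - a/(1+q) * (u - z) powr (1+q))"
  have cF: "continuous_on {z..y} F"
    using DERIV_isCont[OF d] by (intro continuous_at_imp_continuous_on) auto
  have "G z \<le> G y"
  proof (rule DERIV_nonneg_imp_increasing_open[OF y(1)])
    fix u assume u: "z < u" "u < y"
    have "((\<lambda>u. (u - z) powr (1+q)) has_real_derivative ((1+q) * (u - z) powr (1+q-1)) * (1 - 0)) (at u)"
      using u by (intro DERIV_chain2[OF has_real_derivative_powr] DERIV_diff DERIV_ident DERIV_const) auto
    then have "(G has_real_derivative F' u - a/(1+q) * (((1+q) * (u - z) powr (1+q-1)) * (1 - 0))) (at u)"
      unfolding G_def by (intro DERIV_diff d DERIV_cmult)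
    moreover have "F' u - a/(1+q) * (((1+q) * (u - z) powr (1+q-1)) * (1 - 0)) = F' u - a * (u - z) powr q"
      using q by simp
    moreover have "F' u - a * (u - z) powr q \<ge> 0" using g[of u] u y by simp
    ultimately show "\<exists>y. (G has_real_derivative y) (at u) \<and> 0 \<le> y" by auto
  next
    show "continuous_on {z..y} G"
      unfolding G_def using q
      by (intro continuous_intros cF continuous_on_powr') auto
  qed
  then show ?thesis unfolding G_def by simp
qed

lemma one_side_abs:
  fixes F F' :: "real \<Rightarrow> real"
  assumes d: "\<And>y. (F has_real_derivative F' y) (at y)"
   and a: "a > 0" and q: "q > 0"
   and nz: "\<And>y. z < y \<Longrightarrow> y < z + \<rho> \<Longrightarrow> F' y \<noteq> 0"
   and g: "\<And>y. z < y \<Longrightarrow> y < z + \<rho> \<Longrightarrow> \<bar>F' y\<bar> \<ge> a * (y - z) powr q"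
   and y: "z \<le> y" "y < z + \<rho>"
  shows "\<bar>F y - F z\<bar> \<ge> a/(1+q) * (y - z) powr (1+q)"
proof -
  have "(\<forall>x\<in>{z<..<z+\<rho>}. F' x > 0) \<or> (\<forall>x\<in>{z<..<z+\<rho>}. F' x < 0)"
    by (rule const_sign[OF d]) (use nz in auto)
  then show ?thesis
  proof
    assume p: "\<forall>x\<in>{z<..<z+\<rho>}. F' x > 0"
    have "F y - F z \<ge> a/(1+q) * (y - z) powr (1+q)"
    proof (rule one_side_pos[OF d a q _ y])
      fix x assume x: "z < x" "x < z + \<rho>"
      then have "F' x > 0" using p by auto
      then show "a * (x - z) powr q \<le> F' x" using g[OF x] by auto
    qed
    then show ?thesis by linarith
  next
    assume p: "\<forall>x\<in>{z<..<z+\<rho>}. F' x < 0"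
    have "(- F y) - (- F z) \<ge> a/(1+q) * (y - z) powr (1+q)"
    proof (rule one_side_pos[of "\<lambda>x. - F x" "\<lambda>x. - F' x", OF _ a q _ y])
      show "\<And>y. ((\<lambda>x. - F x) has_real_derivative - F' y) (at y)" by (intro DERIV_minus d)
      fix x assume x: "z < x" "x < z + \<rho>"
      then have "F' x < 0" using p by auto
      then show "a * (x - z) powr q \<le> - F' x" using g[OF x] by auto
    qed
    then show ?thesis by linarith
  qed
qed

locale setting =
  fixes h h' h'' :: "real \<Rightarrow> real" and q1 q2 C1 C2 :: real
  assumes d1: "\<And>x. (h has_real_derivative h' x) (at x)"
    and d2: "\<And>x. (h' has_real_derivative h'' x) (at x)"
    and fin: "finite {x. h'' x = 0}"
    and q1: "q1 > 0"
    and ord: "\<And>\<xi>. h'' \<xi> = 0 \<Longrightarrow>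
               \<exists>a>0. \<exists>\<delta>>0. \<forall>x. \<bar>x - \<xi>\<bar> < \<delta> \<longrightarrow> \<bar>h'' x\<bar> \<ge> a * \<bar>x - \<xi>\<bar> powr q1"
    and C1: "C1 > 0" and C2: "C2 > 0" and q2: "q2 \<ge> 0"
    and grow: "\<And>x. \<bar>x\<bar> \<ge> C1 \<Longrightarrow> \<bar>h'' x\<bar> \<ge> C2 * \<bar>x\<bar> powr q2"
begin

lemma hpp_nz: "\<bar>x\<bar> \<ge> C1 \<Longrightarrow> h'' x \<noteq> 0"
proof -
  assume x: "\<bar>x\<bar> \<ge> C1"
  have "C2 * \<bar>x\<bar> powr q2 > 0" using x C1 C2 by auto
  then show ?thesis using grow[OF x] by auto
qed

lemma hp_big: "\<exists>K>0. \<forall>\<delta>\<ge>1. \<forall>x. \<bar>h' x\<bar> \<le> \<delta> \<longrightarrow> \<bar>x\<bar> \<le> K * \<delta> powr (1/(1+q2))"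
proof -
  define A where "A = C2/(1+q2)"
  have A: "A > 0" unfolding A_def using C2 q2 by auto
  define B1 where "B1 = A * C1 powr (1+q2) + \<bar>h' C1\<bar>"
  define B2 where "B2 = A * C1 powr (1+q2) + \<bar>h' (- C1)\<bar>"
  have R: "\<bar>h' y\<bar> \<ge> A * y powr (1+q2) - B1" if "y \<ge> C1" for y
    unfolding A_def B1_def
  proof (rule growth_side[OF d2 C1 C2 q2 _ that])
    fix y assume y: "C1 \<le> y"
    then have "\<bar>y\<bar> = y" "\<bar>y\<bar> \<ge> C1" using C1 by auto
    then show "C2 * y powr q2 \<le> \<bar>h'' y\<bar>" using grow[of y] by simp
  qed
  have dm: "((\<lambda>y. h' (- y)) has_real_derivative h'' (- y) * - 1) (at y)" for y
    by (rule DERIV_chain2[OF d2 DERIV_minus[OF DERIV_ident]])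
  have Lf: "\<bar>h' (- y)\<bar> \<ge> A * y powr (1+q2) - B2" if "y \<ge> C1" for y
  proof -
    have "\<bar>h' (- y)\<bar> \<ge> A * y powr (1+q2) - (A * C1 powr (1+q2) + \<bar>h' (- C1)\<bar>)"
      unfolding A_def
    proof (rule growth_side[OF dm C1 C2 q2 _ that])
      fix y assume "C1 \<le> y"
      then show "C2 * y powr q2 \<le> \<bar>h'' (- y) * - 1\<bar>" using grow[of "-y"] C1 by auto
    qed
    then show ?thesis unfolding B2_def .
  qed
  define B where "B = max B1 B2"
  have "B1 \<ge> 0" unfolding B1_def using A by (intro add_nonneg_nonneg mult_nonneg_nonneg) auto
  then have B: "B \<ge> 0" unfolding B_def by linarith
  have AB: "\<bar>h' x\<bar> \<ge> A * \<bar>x\<bar> powr (1+q2) - B" if "\<bar>x\<bar> \<ge> C1" for x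
  proof (cases "x \<ge> 0")
    case True
    then show ?thesis using R[of x] that unfolding B_def by auto
  next
    case False
    then show ?thesis using Lf[of "-x"] that unfolding B_def by auto
  qed
  define K where "K = max C1 (((1+B)/A) powr (1/(1+q2)))"
  have K: "K > 0" unfolding K_def using C1 by auto
  have "\<bar>x\<bar> \<le> K * \<delta> powr (1/(1+q2))" if \<delta>: "\<delta> \<ge> 1" "\<bar>h' x\<bar> \<le> \<delta>" for \<delta> x
  proof (cases "\<bar>x\<bar> \<ge> C1")
    case False
    have "1 \<le> \<delta> powr (1/(1+q2))" using \<delta> q2 by (intro ge_one_powr_ge_zero) auto
    moreover have "C1 \<le> K" unfolding K_def by simp
    ultimately have "C1 \<le> K * \<delta> powr (1/(1+q2))"
      using K by (smt (verit) mult_le_cancel_left1)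
    then show ?thesis using False by linarith
  next
    case True
    have "A * \<bar>x\<bar> powr (1+q2) \<le> \<delta> + B" using AB[OF True] \<delta> by linarith
    also have "\<dots> \<le> (1+B) * \<delta>" using \<delta> B mult_left_mono[of 1 \<delta> B] by (simp add: algebra_simps)
    finally have "\<bar>x\<bar> powr (1+q2) \<le> ((1+B)/A) * \<delta>" using A by (simp add: field_simps)
    then have "(\<bar>x\<bar> powr (1+q2)) powr (1/(1+q2)) \<le> (((1+B)/A) * \<delta>) powr (1/(1+q2))"
      using q2 by (intro powr_mono2) auto
    also have "(\<bar>x\<bar> powr (1+q2)) powr (1/(1+q2)) = \<bar>x\<bar>"
      using q2 by (simp add: powr_powr)
    also have "(((1+B)/A) * \<delta>) powr (1/(1+q2)) = ((1+B)/A) powr (1/(1+q2)) * \<delta> powr (1/(1+q2))"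
      by (rule powr_mult)
    also have "\<dots> \<le> K * \<delta> powr (1/(1+q2))"
      unfolding K_def by (intro mult_right_mono) auto
    finally show ?thesis .
  qed
  then show ?thesis using K by blast
qed

lemma LB:
  assumes z: "h' z = 0"
  shows "\<exists>c>0. \<exists>\<rho>>0. \<forall>w. \<bar>w - z\<bar> < \<rho> \<longrightarrow> \<bar>h' w\<bar> \<ge> c * \<bar>w - z\<bar> powr (1+q1)"
proof (cases "h'' z = 0")
  case False
  define D where "D = h'' z"
  have "((\<lambda>k. (h' (z+k) - h' z) / k) \<longlongrightarrow> D) (at 0)" using d2[of z] by (simp add: DERIV_def D_def)
  moreover have "\<bar>D\<bar>/2 > 0" using False by (simp add: D_def)
  ultimately have "\<forall>\<^sub>F k in at 0. dist ((h' (z+k) - h' z) / k) D < \<bar>D\<bar>/2" by (rule tendstoD)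
  then obtain d where d: "d > 0" "\<And>k. k \<noteq> 0 \<Longrightarrow> dist k 0 < d \<Longrightarrow> dist ((h' (z+k) - h' z) / k) D < \<bar>D\<bar>/2"
    by (auto simp: eventually_at)
  show ?thesis
  proof (intro exI conjI allI impI)
    show "\<bar>D\<bar>/2 > 0" by fact
    show "min d 1 > 0" using d by auto
    fix w assume w: "\<bar>w - z\<bar> < min d 1"
    show "\<bar>h' w\<bar> \<ge> \<bar>D\<bar>/2 * \<bar>w - z\<bar> powr (1+q1)"
    proof (cases "w = z")
      case True then show ?thesis using z by simp
    next
      case False
      define k where "k = w - z"
      have k0: "k \<noteq> 0" using False by (simp add: k_def)
      have "dist ((h' (z+k) - h' z) / k) D < \<bar>D\<bar>/2" using d(2)[OF k0] w by (simp add: k_def dist_real_def)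
      then have hk: "\<bar>h' w / k - D\<bar> < \<bar>D\<bar>/2" using z by (simp add: k_def dist_real_def)
      have "\<bar>D\<bar> \<le> \<bar>h' w / k\<bar> + \<bar>h' w / k - D\<bar>" by linarith
      then have "\<bar>h' w / k\<bar> \<ge> \<bar>D\<bar>/2" using hk by linarith
      then have "\<bar>h' w\<bar> / \<bar>k\<bar> \<ge> \<bar>D\<bar>/2" by (simp only: abs_divide)
      then have m: "\<bar>D\<bar>/2 * \<bar>k\<bar> \<le> \<bar>h' w\<bar>" using k0 by (simp add: pos_le_divide_eq)
      have "\<bar>k\<bar> powr (1+q1) \<le> \<bar>k\<bar> powr 1"
        using w q1 by (intro powr_mono') (auto simp: k_def)
      then have "\<bar>k\<bar> powr (1+q1) \<le> \<bar>k\<bar>" by simp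
      then have "\<bar>D\<bar>/2 * \<bar>k\<bar> powr (1+q1) \<le> \<bar>D\<bar>/2 * \<bar>k\<bar>"
        by (intro mult_left_mono) auto
      then show ?thesis using m by (simp add: k_def)
    qed
  qed
next
  case True
  obtain a \<delta>0 where a: "a > 0" "\<delta>0 > 0" and ordz: "\<And>x. \<bar>x - z\<bar> < \<delta>0 \<Longrightarrow> \<bar>h'' x\<bar> \<ge> a * \<bar>x - z\<bar> powr q1"
    using ord[OF True] by blast
  obtain d1 where d1: "d1 > 0" "\<And>x. h'' x = 0 \<Longrightarrow> x \<noteq> z \<Longrightarrow> d1 \<le> dist z x"
    using finite_set_avoid[OF fin, of z] by auto
  define \<rho> where "\<rho> = min \<delta>0 d1"
  have \<rho>: "\<rho> > 0" using a d1 by (simp add: \<rho>_def)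
  have nz: "h'' y \<noteq> 0" if "\<bar>y - z\<bar> < \<rho>" "y \<noteq> z" for y
  proof
    assume "h'' y = 0"
    then have "d1 \<le> dist z y" using d1(2) that(2) by blast
    moreover have "dist z y = \<bar>y - z\<bar>" by (simp add: dist_real_def abs_minus_commute)
    moreover have "\<rho> \<le> d1" by (simp add: \<rho>_def)
    ultimately show False using that(1) by linarith
  qed
  have R: "\<bar>h' y\<bar> \<ge> a/(1+q1) * (y - z) powr (1+q1)" if "z \<le> y" "y < z + \<rho>" for y
  proof -
    have "\<bar>h' y - h' z\<bar> \<ge> a/(1+q1) * (y - z) powr (1+q1)"
    proof (rule one_side_abs[OF d2 a(1) q1 _ _ that])
      fix y assume y: "z < y" "y < z + \<rho>"
      show "h'' y \<noteq> 0" using nz[of y] y by auto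
      have "\<bar>h'' y\<bar> \<ge> a * \<bar>y - z\<bar> powr q1" using ordz[of y] y by (auto simp: \<rho>_def)
      then show "a * (y - z) powr q1 \<le> \<bar>h'' y\<bar>" using y by simp
    qed
    then show ?thesis using z by simp
  qed
  have dL: "((\<lambda>y. h' (2*z - y)) has_real_derivative h'' (2*z - y) * (0 - 1)) (at y)" for y
    by (rule DERIV_chain2[OF d2 DERIV_diff[OF DERIV_const DERIV_ident]])
  have L: "\<bar>h' (2*z - y)\<bar> \<ge> a/(1+q1) * (y - z) powr (1+q1)" if "z \<le> y" "y < z + \<rho>" for y
  proof -
    have "\<bar>h' (2*z - y) - h' (2*z - z)\<bar> \<ge> a/(1+q1) * (y - z) powr (1+q1)"
    proof (rule one_side_abs[OF dL a(1) q1 _ _ that])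
      fix y assume y: "z < y" "y < z + \<rho>"
      show "h'' (2*z - y) * (0 - 1) \<noteq> 0" using nz[of "2*z - y"] y by auto
      have "\<bar>h'' (2*z - y)\<bar> \<ge> a * \<bar>(2*z - y) - z\<bar> powr q1" using ordz[of "2*z-y"] y by (auto simp: \<rho>_def)
      moreover have "\<bar>(2*z - y) - z\<bar> = y - z" using y by simp
      ultimately show "a * (y - z) powr q1 \<le> \<bar>h'' (2*z - y) * (0 - 1)\<bar>" by simp
    qed
    then show ?thesis using z by simp
  qed
  show ?thesis
  proof (intro exI conjI allI impI)
    show "a/(1+q1) > 0" using a q1 by simp
    show "\<rho> > 0" by fact
    fix w assume w: "\<bar>w - z\<bar> < \<rho>"
    show "\<bar>h' w\<bar> \<ge> a/(1+q1) * \<bar>w - z\<bar> powr (1+q1)"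
    proof (cases "w \<ge> z")
      case True
      have z2: "w < z + \<rho>" using w by linarith
      have e: "\<bar>w - z\<bar> = w - z" using True by simp
      show ?thesis using R[OF True z2] unfolding e .
    next
      case False
      have z1: "z \<le> 2*z - w" using False by linarith
      have "z - w < \<rho>" using w False by (simp add: abs_if)
      then have z2: "2*z - w < z + \<rho>" by linarith
      have e1: "2*z - (2*z - w) = w" by simp
      have e2: "(2*z - w) - z = \<bar>w - z\<bar>" using False by simp
      show ?thesis using L[OF z1 z2] unfolding e1 e2 .
    qed
  qed
qed

lemma M1:
  "\<exists>K>0. \<forall>\<delta> x y. 0 < \<delta> \<longrightarrow> \<delta> \<le> 1 \<longrightarrow> x \<le> y \<longrightarrow> (\<forall>w\<in>{x..y}. \<bar>h' w\<bar> \<le> \<delta>) \<longrightarrow>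
      y - x \<le> K * \<delta> powr (1/(1+q1))"
proof (rule ccontr)
  define p where "p = 1 + q1"
  have p: "p \<ge> 1" "p > 0" using q1 by (auto simp: p_def)
  assume neg: "\<not> ?thesis"
  have "\<forall>n::nat. \<exists>\<delta> x y. 0 < \<delta> \<and> \<delta> \<le> 1 \<and> x \<le> y \<and> (\<forall>w\<in>{x..y}. \<bar>h' w\<bar> \<le> \<delta>) \<and>
      (real n + 1) * \<delta> powr (1/p) < y - x"
  proof
    fix n :: nat
    have "real n + 1 > 0" by simp
    then have "\<not> (\<forall>\<delta> x y. 0 < \<delta> \<longrightarrow> \<delta> \<le> 1 \<longrightarrow> x \<le> y \<longrightarrow> (\<forall>w\<in>{x..y}. \<bar>h' w\<bar> \<le> \<delta>) \<longrightarrow>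
      y - x \<le> (real n + 1) * \<delta> powr (1/(1+q1)))" using neg by blast
    then show "\<exists>\<delta> x y. 0 < \<delta> \<and> \<delta> \<le> 1 \<and> x \<le> y \<and> (\<forall>w\<in>{x..y}. \<bar>h' w\<bar> \<le> \<delta>) \<and>
      (real n + 1) * \<delta> powr (1/p) < y - x" by (auto simp: not_le p_def)
  qed
  then obtain D X Y where DXY: "\<And>n. 0 < D n \<and> D n \<le> 1 \<and> X n \<le> Y n \<and> (\<forall>w\<in>{X n..Y n}. \<bar>h' w\<bar> \<le> D n) \<and>
      (real n + 1) * D n powr (1/p) < Y n - X n"
    by metis
  have D0: "0 < D n" and D1: "D n \<le> 1" and XY: "X n \<le> Y n"
    and big: "(real n + 1) * D n powr (1/p) < Y n - X n" for n using DXY[of n] by auto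
  have hD: "\<And>n w. w \<in> {X n..Y n} \<Longrightarrow> \<bar>h' w\<bar> \<le> D n" using DXY by blast
  obtain K0 where K0: "K0 > 0" "\<And>\<delta> x. \<delta> \<ge> 1 \<Longrightarrow> \<bar>h' x\<bar> \<le> \<delta> \<Longrightarrow> \<bar>x\<bar> \<le> K0 * \<delta> powr (1/(1+q2))"
    using hp_big by blast
  have bx: "\<bar>x\<bar> \<le> K0" if "\<bar>h' x\<bar> \<le> 1" for x using K0(2)[of 1 x] that by simp
  have BX: "\<bar>X n\<bar> \<le> K0" "\<bar>Y n\<bar> \<le> K0" for n
    using bx hD[of "X n" n] hD[of "Y n" n] D1[of n] XY[of n] by force+
  define e where "e = (\<lambda>n. D n powr (1/p))"
  have e0: "e n > 0" for n using D0[of n] by (simp add: e_def)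
  have De: "D n = e n powr p" for n using D0[of n] p by (simp add: e_def powr_powr)
  have ebound: "e n \<le> 2 * K0 / real n" if "n \<ge> 1" for n
  proof -
    have "(real n + 1) * e n < 2 * K0" using big[of n] BX[of n] unfolding e_def by linarith
    moreover have "real n * e n \<le> (real n + 1) * e n" using e0[of n] by (simp add: algebra_simps)
    ultimately have "real n * e n \<le> 2 * K0" by linarith
    then show ?thesis using that by (simp add: field_simps)
  qed
  have elim: "e \<longlonglongrightarrow> 0"
  proof (rule tendsto_sandwich[of "\<lambda>_. 0" e sequentially "\<lambda>n. 2 * K0 / real n"])
    show "\<forall>\<^sub>F n in sequentially. 0 \<le> e n" using e0 by (simp add: less_imp_le)
    show "\<forall>\<^sub>F n in sequentially. e n \<le> 2 * K0 / real n"
      using ebound by (auto simp: eventually_sequentially)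
    show "(\<lambda>n. 2 * K0 / real n) \<longlonglongrightarrow> 0" by (rule lim_const_over_n)
  qed simp
  have Dlim: "D \<longlonglongrightarrow> 0"
  proof -
    have "(\<lambda>n. e n powr p) \<longlonglongrightarrow> 0"
      using p e0 by (intro tendsto_zero_powrI[OF elim tendsto_const]) (auto simp: less_imp_le)
    moreover have "D = (\<lambda>n. e n powr p)" using De by auto
    ultimately show ?thesis by simp
  qed
  define S where "S = {-K0..K0} \<times> {-K0..K0}"
  have cS: "compact S" unfolding S_def by (intro compact_Times compact_Icc)
  have inS: "\<forall>n. (X n, Y n) \<in> S"
  proof
    fix n show "(X n, Y n) \<in> S" using BX[of n] unfolding S_def by (auto simp: abs_le_iff)
  qed
  obtain l r where lr: "l \<in> S" "strict_mono r" "((\<lambda>n. (X n, Y n)) \<circ> r) \<longlonglongrightarrow> l"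
    using compact_imp_seq_compact[OF cS] inS unfolding seq_compact_def by metis
  define xs where "xs = fst l"
  define ys where "ys = snd l"
  have Xr: "(\<lambda>n. X (r n)) \<longlonglongrightarrow> xs"
    using tendsto_fst[OF lr(3)] unfolding xs_def by (simp add: o_def)
  have Yr: "(\<lambda>n. Y (r n)) \<longlonglongrightarrow> ys"
    using tendsto_snd[OF lr(3)] unfolding ys_def by (simp add: o_def)
  have Dr: "(\<lambda>n. D (r n)) \<longlonglongrightarrow> 0"
    using LIMSEQ_subseq_LIMSEQ[OF Dlim lr(2)] by (simp add: o_def)
  have "xs \<le> ys" using LIMSEQ_le[OF Xr Yr] XY by blast
  then consider "xs < ys" | "xs = ys" by linarith
  then show False
  proof cases
    case 1
    have zero: "h' w = 0" if w: "xs < w" "w < ys" for w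
    proof -
      have ev: "\<forall>\<^sub>F n in sequentially. \<bar>h' w\<bar> \<le> D (r n)"
        using order_tendstoD(2)[OF Xr w(1)] order_tendstoD(1)[OF Yr w(2)]
      proof eventually_elim
        case (elim n)
        then show ?case using hD[of w "r n"] by auto
      qed
      have "\<bar>h' w\<bar> \<le> 0" by (rule tendsto_le[OF _ Dr tendsto_const ev]) simp
      then show ?thesis by simp
    qed
    have "{xs<..<ys} \<subseteq> {x. h'' x = 0}"
    proof
      fix w assume w: "w \<in> {xs<..<ys}"
      have "h'' w = 0"
      proof (rule DERIV_local_const[OF d2[of w], where d="min (w - xs) (ys - w)"])
        show "0 < min (w - xs) (ys - w)" using w by auto
        show "\<forall>y. \<bar>w - y\<bar> < min (w - xs) (ys - w) \<longrightarrow> h' w = h' y"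
        proof (intro allI impI)
          fix y assume "\<bar>w - y\<bar> < min (w - xs) (ys - w)"
          then have "xs < y" "y < ys" by (auto simp: abs_less_iff)
          then show "h' w = h' y" using zero w by auto
        qed
      qed
      then show "w \<in> {x. h'' x = 0}" by simp
    qed
    then have "finite {xs<..<ys}" using fin by (rule finite_subset)
    then show False using infinite_Ioo[OF 1] by simp
  next
    case 2
    define z where "z = xs"
    have hz: "h' z = 0"
    proof -
      have "(\<lambda>n. h' (X (r n))) \<longlonglongrightarrow> h' z"
        unfolding z_def by (rule isCont_tendsto_compose[OF DERIV_isCont[OF d2] Xr])
      then have "(\<lambda>n. \<bar>h' (X (r n))\<bar>) \<longlonglongrightarrow> \<bar>h' z\<bar>" by (rule tendsto_rabs)
      moreover have "\<forall>\<^sub>F n in sequentially. \<bar>h' (X (r n))\<bar> \<le> D (r n)"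
        using hD XY by (auto intro!: always_eventually)
      ultimately have "\<bar>h' z\<bar> \<le> 0" by (intro tendsto_le[OF _ Dr]) auto
      then show ?thesis by simp
    qed
    obtain c \<rho> where c: "c > 0" "\<rho> > 0" and cb: "\<And>w. \<bar>w - z\<bar> < \<rho> \<Longrightarrow> \<bar>h' w\<bar> \<ge> c * \<bar>w - z\<bar> powr p"
      using LB[OF hz] unfolding p_def by blast
    define M where "M = 2 * (1/c) powr (1/p)"
    have close: "\<bar>w - z\<bar> \<le> (1/c) powr (1/p) * e m" if "\<bar>w - z\<bar> < \<rho>" "\<bar>h' w\<bar> \<le> D m" for w m
    proof -
      have "c * \<bar>w - z\<bar> powr p \<le> D m" using cb[OF that(1)] that(2) by linarith
      then have "\<bar>w - z\<bar> powr p \<le> D m / c" using c by (simp add: field_simps)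
      then have "(\<bar>w - z\<bar> powr p) powr (1/p) \<le> (D m / c) powr (1/p)"
        using p by (intro powr_mono2) auto
      also have "(\<bar>w - z\<bar> powr p) powr (1/p) = \<bar>w - z\<bar>" using p by (simp add: powr_powr)
      also have "(D m / c) powr (1/p) = (1/c) powr (1/p) * e m"
        unfolding e_def using D0[of m] c by (simp add: powr_divide divide_inverse powr_mult mult.commute)
      finally show ?thesis .
    qed
    have evX: "\<forall>\<^sub>F n in sequentially. \<bar>X (r n) - z\<bar> < \<rho>"
      using tendstoD[OF Xr c(2)] by (simp add: z_def dist_real_def)
    have evY: "\<forall>\<^sub>F n in sequentially. \<bar>Y (r n) - z\<bar> < \<rho>"
      using tendstoD[OF Yr c(2)] 2 by (simp add: z_def dist_real_def)
    have evM: "\<forall>\<^sub>F n in sequentially. M \<le> real n"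
      by (rule eventually_sequentiallyI[of "nat \<lceil>M\<rceil>"]) linarith
    have "\<forall>\<^sub>F n in sequentially. False"
      using evX evY evM
    proof eventually_elim
      case (elim n)
      define m where "m = r n"
      have "\<bar>X m - z\<bar> \<le> (1/c) powr (1/p) * e m"
        using close[of "X m" m] elim hD[of "X m" m] XY[of m] unfolding m_def by auto
      moreover have "\<bar>Y m - z\<bar> \<le> (1/c) powr (1/p) * e m"
        using close[of "Y m" m] elim hD[of "Y m" m] XY[of m] unfolding m_def by auto
      ultimately have "Y m - X m \<le> M * e m" unfolding M_def by (simp add: abs_le_iff) 
      moreover have "(real m + 1) * e m < Y m - X m" using big[of m] by (simp add: e_def)
      ultimately have "(real m + 1) * e m < M * e m" by linarith
      then have "real m + 1 < M" using e0[of m] by (simp add: mult_less_cancel_right)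
      moreover have "n \<le> m" unfolding m_def by (rule seq_suble[OF lr(2)])
      ultimately show False using elim by linarith
    qed
    then show False by simp
  qed
qed

end


context setting begin

definition mf :: "real \<Rightarrow> real" where
  "mf \<delta> = (if \<delta> \<le> 1 then \<delta> powr (1/(1+q1)) else \<delta> powr (1/(1+q2)))"

lemma mf_nonneg: "mf \<delta> \<ge> 0" by (simp add: mf_def)

lemma M: "\<exists>K>0. \<forall>\<delta> x y. 0 < \<delta> \<longrightarrow> x \<le> y \<longrightarrow> (\<forall>w\<in>{x..y}. \<bar>h' w\<bar> \<le> \<delta>) \<longrightarrow> y - x \<le> K * mf \<delta>"
proof -
  obtain K1 where K1: "K1 > 0" "\<And>\<delta> x y. 0 < \<delta> \<Longrightarrow> \<delta> \<le> 1 \<Longrightarrow> x \<le> y \<Longrightarrow> (\<forall>w\<in>{x..y}. \<bar>h' w\<bar> \<le> \<delta>) \<Longrightarrow>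
      y - x \<le> K1 * \<delta> powr (1/(1+q1))"
    using M1 by blast
  obtain K2 where K2: "K2 > 0" "\<And>\<delta> x. \<delta> \<ge> 1 \<Longrightarrow> \<bar>h' x\<bar> \<le> \<delta> \<Longrightarrow> \<bar>x\<bar> \<le> K2 * \<delta> powr (1/(1+q2))"
    using hp_big by blast
  define K where "K = max K1 (2 * K2)"
  have "y - x \<le> K * mf \<delta>" if \<delta>: "0 < \<delta>" and xy: "x \<le> y" and w: "\<forall>w\<in>{x..y}. \<bar>h' w\<bar> \<le> \<delta>" for \<delta> x y
  proof (cases "\<delta> \<le> 1")
    case True
    then have "y - x \<le> K1 * mf \<delta>" using K1(2)[OF \<delta> True xy w] by (simp add: mf_def)
    also have "\<dots> \<le> K * mf \<delta>" unfolding K_def by (intro mult_right_mono mf_nonneg) auto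
    finally show ?thesis .
  next
    case False
    have "\<bar>x\<bar> \<le> K2 * \<delta> powr (1/(1+q2))" using K2(2)[of \<delta> x] w xy False by auto
    moreover have "\<bar>y\<bar> \<le> K2 * \<delta> powr (1/(1+q2))" using K2(2)[of \<delta> y] w xy False by auto
    ultimately have "y - x \<le> (2 * K2) * mf \<delta>" using False by (simp add: mf_def abs_le_iff)
    also have "\<dots> \<le> K * mf \<delta>" unfolding K_def by (intro mult_right_mono mf_nonneg) auto
    finally show ?thesis .
  qed
  moreover have "K > 0" using K1 unfolding K_def by auto
  ultimately show ?thesis by blast
qed

lemma piece_bound:
  assumes t: "t > 0" and \<delta>: "\<delta> > 0" and ab: "a \<le> b" and Lb: "Lb \<ge> 0"
    and len: "\<And>x y. x \<le> y \<Longrightarrow> (\<forall>w\<in>{x..y}. \<bar>h' w\<bar> \<le> \<delta>) \<Longrightarrow> y - x \<le> Lb"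
    and nz: "\<And>u. a < u \<Longrightarrow> u < b \<Longrightarrow> h'' u \<noteq> 0"
  shows "norm (integral {a..b} (\<lambda>x. cis (t * h x))) \<le> 8 / (t * \<delta>) + Lb"
proof -
  define S where "S = {u\<in>{a..b}. h'' u \<noteq> 0}"
  have "(\<forall>x\<in>S. h'' x > 0) \<or> (\<forall>x\<in>S. h'' x < 0)"
  proof (rule const_sign[OF d2])
    fix x y z assume "x \<in> S" "z \<in> S" "x \<le> y" "y \<le> z"
    then show "y \<in> S" unfolding S_def using nz[of y] by (cases "y = x \<or> y = z") auto
  qed (auto simp: S_def)
  then show ?thesis
  proof
    assume p: "\<forall>x\<in>S. h'' x > 0"
    show ?thesis
    proof (rule piece[OF d1 d2 t \<delta> ab Lb])
      fix x assume "x \<in> {a..b}"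
      then show "0 \<le> h'' x" using p unfolding S_def by (cases "h'' x = 0") auto
    qed (use len in auto)
  next
    assume p: "\<forall>x\<in>S. h'' x < 0"
    show ?thesis
    proof (rule piece_neg[OF d1 d2 t \<delta> ab Lb])
      fix x assume "x \<in> {a..b}"
      then show "h'' x \<le> 0" using p unfolding S_def by (cases "h'' x = 0") auto
    qed (use len in auto)
  qed
qed

lemma induct_bound:
  assumes t: "t > 0" and \<delta>: "\<delta> > 0" and Lb: "Lb \<ge> 0"
    and len: "\<And>x y. x \<le> y \<Longrightarrow> (\<forall>w\<in>{x..y}. \<bar>h' w\<bar> \<le> \<delta>) \<Longrightarrow> y - x \<le> Lb"
    and ab: "a \<le> b"
  shows "norm (integral {a..b} (\<lambda>x. cis (t * h x))) \<le> (real (card {x. h'' x = 0}) + 1) * (8 / (t * \<delta>) + Lb)"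
proof -
  define Z where "Z = {x. h'' x = 0}"
  define B where "B = 8 / (t * \<delta>) + Lb"
  have B: "B \<ge> 0" unfolding B_def using t \<delta> Lb by simp
  have finZ: "finite (Z \<inter> A)" for A using fin unfolding Z_def by simp
  have hc: "continuous_on {x..y} h" for x y
    using DERIV_isCont[OF d1] by (intro continuous_at_imp_continuous_on) auto
  have int: "(\<lambda>x. cis (t * h x)) integrable_on {x..y}" for x y
    by (intro integrable_continuous_interval continuous_intros hc)
  have main: "norm (integral {a..b} (\<lambda>x. cis (t * h x))) \<le> (n + 1) * B"
    if "a \<le> b" "card (Z \<inter> {a<..<b}) = n" for n a b
    using that
  proof (induction n arbitrary: a b rule: less_induct)
    case (less n a b)
    note ab = less.prems(1)
    note cn = less.prems(2)
    show ?case
      proof (cases "Z \<inter> {a<..<b} = {}")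
        case True
        have le1: "norm (integral {a..b} (\<lambda>x. cis (t * h x))) \<le> B"
          unfolding B_def
        proof (rule piece_bound[OF t \<delta> ab Lb len])
          fix u assume "a < u" "u < b"
          then show "h'' u \<noteq> 0" using True unfolding Z_def by auto
        qed
        have le2: "B \<le> (real n + 1) * B" using B mult_nonneg_nonneg[of "real n" B] by (simp add: distrib_right)
        show ?thesis using le1 le2 by linarith
      next
        case False
        then obtain z where z: "z \<in> Z" "a < z" "z < b" by auto
        define n1 where "n1 = card (Z \<inter> {a<..<z})"
        define n2 where "n2 = card (Z \<inter> {z<..<b})"
        have split: "Z \<inter> {a<..<b} = (Z \<inter> {a<..<z}) \<union> ({z} \<union> (Z \<inter> {z<..<b}))"
          using z by auto
        have "card (Z \<inter> {a<..<b}) = n1 + (1 + n2)"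
          unfolding split n1_def n2_def
          by (subst card_Un_disjoint) (use finZ in \<open>auto simp: card_insert_if\<close>)
        then have nn: "n = n1 + n2 + 1" using cn by simp
        have "n1 < n" "n2 < n" using nn by auto
        have I1: "norm (integral {a..z} (\<lambda>x. cis (t * h x))) \<le> (real n1 + 1) * B"
          by (rule less.IH[OF \<open>n1 < n\<close>]) (use z n1_def in auto)
        have I2: "norm (integral {z..b} (\<lambda>x. cis (t * h x))) \<le> (real n2 + 1) * B"
          by (rule less.IH[OF \<open>n2 < n\<close>]) (use z n2_def in auto)
        have eqI: "integral {a..b} (\<lambda>x. cis (t * h x)) = integral {a..z} (\<lambda>x. cis (t * h x)) + integral {z..b} (\<lambda>x. cis (t * h x))"
          using Henstock_Kurzweil_Integration.integral_combine[of a z b, OF _ _ int] z by simp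
        have tri: "norm (integral {a..z} (\<lambda>x. cis (t * h x)) + integral {z..b} (\<lambda>x. cis (t * h x)))
           \<le> norm (integral {a..z} (\<lambda>x. cis (t * h x))) + norm (integral {z..b} (\<lambda>x. cis (t * h x)))"
          by (rule norm_triangle_ineq)
        have sumB: "(real n1 + 1) * B + (real n2 + 1) * B = (real n + 1) * B"
          using nn by (simp add: algebra_simps)
        show ?thesis unfolding eqI using tri I1 I2 sumB by linarith
      qed
  qed
  have "norm (integral {a..b} (\<lambda>x. cis (t * h x))) \<le> (real (card (Z \<inter> {a<..<b})) + 1) * B"
    using main[OF ab refl] .
  also have "\<dots> \<le> (real (card Z) + 1) * B"
    using B by (intro mult_right_mono) (auto intro!: card_mono fin simp: Z_def)
  finally show ?thesis unfolding Z_def B_def .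
qed

end


lemma vdc1_neg:
  fixes h h' h'' :: "real \<Rightarrow> real" and t \<delta> u v :: real
  assumes d1: "\<And>x. (h has_real_derivative h' x) (at x)"
    and d2: "\<And>x. (h' has_real_derivative h'' x) (at x)"
    and t: "t > 0" and \<delta>: "\<delta> > 0" and uv: "u \<le> v"
    and neg: "\<And>x. x \<in> {u..v} \<Longrightarrow> h'' x \<le> 0"
    and big: "\<And>x. x \<in> {u..v} \<Longrightarrow> \<delta> \<le> \<bar>h' x\<bar>"
  shows "norm (integral {u..v} (\<lambda>x. cis (t * h x))) \<le> 4 / (t * \<delta>)"
proof -
  have "norm (integral {u..v} (\<lambda>x. cis (t * (- h x)))) \<le> 4 / (t * \<delta>)"
    by (rule vdc1[of "\<lambda>x. - h x" "\<lambda>x. - h' x" "\<lambda>x. - h'' x"])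
      (use d1 d2 t \<delta> uv neg big in \<open>auto intro: DERIV_minus\<close>)
  moreover have "integral {u..v} (\<lambda>x. cis (t * (- h x))) = cnj (integral {u..v} (\<lambda>x. cis (t * h x)))"
    by (simp add: integral_cnj cis_cnj)
  ultimately show ?thesis by simp
qed

lemma conv_at_top:
  fixes G :: "real \<Rightarrow> complex"
  assumes c: "\<And>e. e > 0 \<Longrightarrow> \<exists>R. \<forall>x y. R \<le> x \<longrightarrow> x \<le> y \<longrightarrow> norm (G y - G x) < e"
  shows "\<exists>L. (G \<longlongrightarrow> L) at_top"
proof -
  have "cauchy_filter (filtermap G at_top)"
    unfolding cauchy_filter_metric_filtermap
  proof (intro allI impI)
    fix e :: real assume e: "e > 0"
    obtain R where R: "\<And>x y. R \<le> x \<Longrightarrow> x \<le> y \<Longrightarrow> norm (G y - G x) < e" using c[OF e] by blast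
    show "\<exists>P. eventually P at_top \<and> (\<forall>x y. P x \<and> P y \<longrightarrow> dist (G x) (G y) < e)"
    proof (intro exI conjI allI impI)
      show "eventually (\<lambda>x. R \<le> x) at_top" by (rule eventually_ge_at_top)
      fix x y assume "R \<le> x \<and> R \<le> y"
      then show "dist (G x) (G y) < e"
        using R[of x y] R[of y x] by (cases "x \<le> y") (auto simp: dist_norm norm_minus_commute)
    qed
  qed
  moreover have "filtermap G at_top \<noteq> bot" by (simp add: filtermap_bot_iff)
  moreover have "filtermap G at_top \<le> principal UNIV" by simp
  ultimately have "\<exists>L. filtermap G at_top \<le> nhds L"
    by (intro cauchy_filter_complete_converges[OF _ complete_UNIV])
  then obtain L where "filtermap G at_top \<le> nhds L" ..
  then show ?thesis unfolding filterlim_def by blast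
qed

lemma conv_at_bot:
  fixes G :: "real \<Rightarrow> complex"
  assumes c: "\<And>e. e > 0 \<Longrightarrow> \<exists>R. \<forall>x y. x \<le> y \<longrightarrow> y \<le> R \<longrightarrow> norm (G y - G x) < e"
  shows "\<exists>L. (G \<longlongrightarrow> L) at_bot"
proof -
  have "\<exists>L. ((\<lambda>x. G (- x)) \<longlongrightarrow> L) at_top"
  proof (rule conv_at_top)
    fix e :: real assume "e > 0"
    then obtain R where R: "\<And>x y. x \<le> y \<Longrightarrow> y \<le> R \<Longrightarrow> norm (G y - G x) < e" using c by blast
    show "\<exists>R. \<forall>x y. R \<le> x \<longrightarrow> x \<le> y \<longrightarrow> norm (G (- y) - G (- x)) < e"
    proof (intro exI allI impI)
      fix x y assume "- R \<le> x" "x \<le> y"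
      then show "norm (G (- y) - G (- x)) < e" using R[of "-y" "-x"] by (simp add: norm_minus_commute)
    qed
  qed
  then show ?thesis by (simp add: filterlim_at_bot_mirror)
qed

lemma pow_alg1:
  fixes t q :: real
  assumes t: "t > 0" and q: "q \<ge> 0"
  shows "t * t powr (-(1+q)/(2+q)) = t powr (1/(2+q))"
proof -
  have "t * t powr (-(1+q)/(2+q)) = t powr 1 * t powr (-(1+q)/(2+q))"
    using t by simp
  also have "\<dots> = t powr (1 + (-(1+q)/(2+q)))"
    by (rule powr_add[symmetric])
  also have "1 + (-(1+q)/(2+q)) = 1/(2+q)"
  proof -
    have "2 + q \<noteq> 0" using q by simp
    then show ?thesis by (simp add: field_simps)
  qed
  finally show ?thesis .
qed

lemma pow_alg2:
  fixes t q :: real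
  assumes t: "t > 0" and q: "q \<ge> 0"
  shows "8 / (t * t powr (-(1+q)/(2+q))) = 8 * t powr (-1/(2+q))"
proof -
  have m: "-1/(2+q) = -(1/(2+q))" by simp
  show ?thesis unfolding pow_alg1[OF t q] m powr_minus by (simp add: divide_inverse)
qed

lemma pow_alg3:
  fixes t q :: real
  assumes t: "t > 0" and q: "q \<ge> 0"
  shows "(t powr (-(1+q)/(2+q))) powr (1/(1+q)) = t powr (-1/(2+q))"
proof -
  have "(-(1+q)/(2+q)) * (1/(1+q)) = -1/(2+q)"
  proof -
    have a: "1 + q \<noteq> 0" "2 + q \<noteq> 0" using q by auto
    have "(-(1+q)/(2+q)) * (1/(1+q)) = -((1+q) * (2+q)) / ((2+q) * (1+q) * (2+q))"
      using a by (simp add: divide_simps)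
    also have "\<dots> = -1/(2+q)" using a by (simp add: mult.commute)
    finally show ?thesis .
  qed
  then show ?thesis by (simp add: powr_powr)
qed

context setting begin

lemma tail_bound:
  assumes t: "t > 0" and \<delta>: "\<delta> \<ge> 1"
  shows "\<exists>R>0. \<forall>u v. (R \<le> u \<and> u \<le> v \<or> u \<le> v \<and> v \<le> -R) \<longrightarrow>
          norm (integral {u..v} (\<lambda>x. cis (t * h x))) \<le> 4 / (t * \<delta>)"
proof -
  obtain K2 where K2: "K2 > 0" "\<And>\<delta> x. \<delta> \<ge> 1 \<Longrightarrow> \<bar>h' x\<bar> \<le> \<delta> \<Longrightarrow> \<bar>x\<bar> \<le> K2 * \<delta> powr (1/(1+q2))"
    using hp_big by blast
  define R where "R = max C1 (K2 * \<delta> powr (1/(1+q2))) + 1"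
  have R: "R > 0" "R > C1" "R > K2 * \<delta> powr (1/(1+q2))" unfolding R_def using C1 by auto
  have bigx: "\<delta> \<le> \<bar>h' x\<bar>" if "\<bar>x\<bar> \<ge> R" for x
  proof (rule ccontr)
    assume "\<not> \<delta> \<le> \<bar>h' x\<bar>"
    then have "\<bar>x\<bar> \<le> K2 * \<delta> powr (1/(1+q2))" using K2(2)[OF \<delta>, of x] by simp
    then show False using that R(3) by linarith
  qed
  have sR: "(\<forall>x\<in>{C1..}. h'' x > 0) \<or> (\<forall>x\<in>{C1..}. h'' x < 0)"
    by (rule const_sign[OF d2]) (use hpp_nz C1 in auto)
  have sL: "(\<forall>x\<in>{..-C1}. h'' x > 0) \<or> (\<forall>x\<in>{..-C1}. h'' x < 0)"
    by (rule const_sign[OF d2]) (use hpp_nz C1 in auto)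
  have \<delta>0: "\<delta> > 0" using \<delta> by simp
  have gen: "norm (integral {u..v} (\<lambda>x. cis (t * h x))) \<le> 4 / (t * \<delta>)"
    if uv: "u \<le> v" and S: "{u..v} \<subseteq> S" and sS: "(\<forall>x\<in>S. h'' x > 0) \<or> (\<forall>x\<in>S. h'' x < 0)"
      and bb: "\<And>x. x \<in> {u..v} \<Longrightarrow> \<delta> \<le> \<bar>h' x\<bar>" for u v S
    using sS
  proof
    assume p: "\<forall>x\<in>S. h'' x > 0"
    show ?thesis
    proof (rule vdc1[OF d1 d2 t \<delta>0 uv _ bb])
      fix x assume "x \<in> {u..v}"
      then have "x \<in> S" using S by auto
      then show "0 \<le> h'' x" using p by (simp add: less_imp_le)
    qed
  next
    assume p: "\<forall>x\<in>S. h'' x < 0"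
    show ?thesis
    proof (rule vdc1_neg[OF d1 d2 t \<delta>0 uv _ bb])
      fix x assume "x \<in> {u..v}"
      then have "x \<in> S" using S by auto
      then show "h'' x \<le> 0" using p by (simp add: less_imp_le)
    qed
  qed
  have "norm (integral {u..v} (\<lambda>x. cis (t * h x))) \<le> 4 / (t * \<delta>)"
    if "R \<le> u \<and> u \<le> v \<or> u \<le> v \<and> v \<le> -R" for u v
    using that
  proof
    assume uv: "R \<le> u \<and> u \<le> v"
    show ?thesis
    proof (rule gen[of u v "{C1..}", OF _ _ sR])
      show "u \<le> v" using uv by simp
      show "{u..v} \<subseteq> {C1..}" using uv R(2) by auto
      fix x assume "x \<in> {u..v}"
      then have "\<bar>x\<bar> \<ge> R" using uv R(1) by auto
      then show "\<delta> \<le> \<bar>h' x\<bar>" by (rule bigx)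
    qed
  next
    assume uv: "u \<le> v \<and> v \<le> -R"
    show ?thesis
    proof (rule gen[of u v "{..-C1}", OF _ _ sL])
      show "u \<le> v" using uv by simp
      show "{u..v} \<subseteq> {..-C1}" using uv R(2) by auto
      fix x assume "x \<in> {u..v}"
      then have "\<bar>x\<bar> \<ge> R" using uv R(1) by auto
      then show "\<delta> \<le> \<bar>h' x\<bar>" by (rule bigx)
    qed
  qed
  then show ?thesis using R by blast
qed

end


context setting begin

lemma improper:
  assumes t: "t > 0"
  shows "\<exists>L. improper_integral_R (\<lambda>x. cis (t * h x)) L \<and>
    (\<forall>B. (\<forall>a b. a \<le> b \<longrightarrow> norm (integral {a..b} (\<lambda>x. cis (t * h x))) \<le> B) \<longrightarrow> norm L \<le> B)"
proof -
  define f where "f = (\<lambda>x. cis (t * h x))"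
  have hc: "continuous_on {x..y} h" for x y
    using DERIV_isCont[OF d1] by (intro continuous_at_imp_continuous_on) auto
  have int: "f integrable_on {x..y}" for x y
    unfolding f_def by (intro integrable_continuous_interval continuous_intros hc)
  have comb: "integral {a..b} f = integral {a..c} f + integral {c..b} f" if "a \<le> c" "c \<le> b" for a b c
    using Henstock_Kurzweil_Integration.integral_combine[OF that int] by simp
  define Gp where "Gp = (\<lambda>x. integral {0..x} f)"
  define Gm where "Gm = (\<lambda>x. integral {x..0} f)"
  have tailR: "\<exists>R>0. \<forall>u v. (R \<le> u \<and> u \<le> v \<or> u \<le> v \<and> v \<le> -R) \<longrightarrow> norm (integral {u..v} f) < e"
    if e: "e > 0" for e
  proof -
    define \<delta> where "\<delta> = max 1 (8 / (t * e))"
    have \<delta>: "\<delta> \<ge> 1" unfolding \<delta>_def by simp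
    obtain R where R: "R > 0" "\<And>u v. (R \<le> u \<and> u \<le> v \<or> u \<le> v \<and> v \<le> -R) \<Longrightarrow>
        norm (integral {u..v} f) \<le> 4 / (t * \<delta>)"
      using tail_bound[OF t \<delta>] unfolding f_def by blast
    have "8 / (t * e) \<le> \<delta>" unfolding \<delta>_def by simp
    then have "8 \<le> \<delta> * (t * e)" using t e by (simp add: field_simps)
    then have "4 / (t * \<delta>) < e" using t e \<delta> by (simp add: field_simps)
    then show ?thesis using R by (meson order_le_less_trans)
  qed
  have "\<exists>Lp. (Gp \<longlongrightarrow> Lp) at_top"
  proof (rule conv_at_top)
    fix e :: real assume "e > 0"
    then obtain R where R0: "R > 0" and RR: "\<forall>u v. (R \<le> u \<and> u \<le> v \<or> u \<le> v \<and> v \<le> -R) \<longrightarrow> norm (integral {u..v} f) < e"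
      using tailR[OF \<open>e > 0\<close>] by blast
    have R: "R > 0" "\<And>u v. R \<le> u \<Longrightarrow> u \<le> v \<Longrightarrow> norm (integral {u..v} f) < e"
      using R0 RR by auto
    show "\<exists>R. \<forall>x y. R \<le> x \<longrightarrow> x \<le> y \<longrightarrow> norm (Gp y - Gp x) < e"
    proof (intro exI allI impI)
      fix x y assume xy: "R \<le> x" "x \<le> y"
      have "Gp y = Gp x + integral {x..y} f" unfolding Gp_def using comb[of 0 x y] xy R by simp
      then show "norm (Gp y - Gp x) < e" using R(2)[OF xy] by simp
    qed
  qed
  then obtain Lp where Lp: "(Gp \<longlongrightarrow> Lp) at_top" by blast
  have "\<exists>Lm. (Gm \<longlongrightarrow> Lm) at_bot"
  proof (rule conv_at_bot)
    fix e :: real assume "e > 0"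
    then obtain R where R0: "R > 0" and RR: "\<forall>u v. (R \<le> u \<and> u \<le> v \<or> u \<le> v \<and> v \<le> -R) \<longrightarrow> norm (integral {u..v} f) < e"
      using tailR[OF \<open>e > 0\<close>] by blast
    have R: "R > 0" "\<And>u v. u \<le> v \<Longrightarrow> v \<le> -R \<Longrightarrow> norm (integral {u..v} f) < e"
      using R0 RR by auto
    show "\<exists>R. \<forall>x y. x \<le> y \<longrightarrow> y \<le> R \<longrightarrow> norm (Gm y - Gm x) < e"
    proof (intro exI allI impI)
      fix x y assume xy: "x \<le> y" "y \<le> -R"
      have "Gm x = integral {x..y} f + Gm y" unfolding Gm_def using comb[of x y 0] xy R by simp
      then show "norm (Gm y - Gm x) < e" using R(2)[OF xy] by (simp add: norm_minus_commute)
    qed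
  qed
  then obtain Lm where Lm: "(Gm \<longlongrightarrow> Lm) at_bot" by blast
  define F where "F = (at_bot \<times>\<^sub>F at_top :: (real \<times> real) filter)"
  have F: "F \<noteq> bot" unfolding F_def by (simp add: prod_filter_eq_bot)
  have ev: "eventually (\<lambda>p. fst p \<le> 0 \<and> 0 \<le> snd p) F"
    unfolding F_def by (intro eventually_prodI eventually_le_at_bot eventually_ge_at_top)
  have lim1: "((\<lambda>p. Gm (fst p) + Gp (snd p)) \<longlongrightarrow> Lm + Lp) F"
    unfolding F_def
    by (intro tendsto_add filterlim_compose[OF Lm filterlim_fst] filterlim_compose[OF Lp filterlim_snd])
  have ev2: "eventually (\<lambda>p. (\<lambda>(a, b). integral {a..b} f) p = Gm (fst p) + Gp (snd p)) F"
    using ev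
  proof eventually_elim
    case (elim p)
    then show ?case unfolding Gm_def Gp_def using comb[of "fst p" 0 "snd p"] by (auto simp: case_prod_beta)
  qed
  have lim: "((\<lambda>(a, b). integral {a..b} f) \<longlongrightarrow> Lm + Lp) F"
    using tendsto_cong[OF ev2] lim1 by simp
  have bound: "norm (Lm + Lp) \<le> B" if B: "\<forall>a b. a \<le> b \<longrightarrow> norm (integral {a..b} f) \<le> B" for B
  proof -
    have "((\<lambda>p. norm ((\<lambda>(a, b). integral {a..b} f) p)) \<longlongrightarrow> norm (Lm + Lp)) F"
      by (rule tendsto_norm[OF lim])
    moreover have "eventually (\<lambda>p. norm ((\<lambda>(a, b). integral {a..b} f) p) \<le> B) F"
      using ev
    proof eventually_elim
      case (elim p)
      then show ?case using B by (auto simp: case_prod_beta)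
    qed
    ultimately show ?thesis using F by (intro tendsto_upperbound) auto
  qed
  have "improper_integral_R f (Lm + Lp)"
    unfolding improper_integral_R_def using int lim unfolding F_def by blast
  then show ?thesis using bound unfolding f_def by blast
qed

lemma final:
  "\<exists>C. \<forall>t>0. \<exists>L. improper_integral_R (\<lambda>x. cis (t * h x)) L \<and>
            (t < 1 \<longrightarrow> norm L \<le> C * t powr (-1 / (2 + q2))) \<and>
            (t \<ge> 1 \<longrightarrow> norm L \<le> C * t powr (-1 / (2 + q1)))"
proof -
  obtain K where K: "K > 0" "\<And>\<delta> x y. 0 < \<delta> \<Longrightarrow> x \<le> y \<Longrightarrow> (\<forall>w\<in>{x..y}. \<bar>h' w\<bar> \<le> \<delta>) \<Longrightarrow> y - x \<le> K * mf \<delta>"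
    using M by blast
  define N where "N = real (card {x. h'' x = 0})"
  define C where "C = (N + 1) * (8 + K)"
  have gen: "norm (integral {a..b} (\<lambda>x. cis (t * h x))) \<le> (N + 1) * (8 / (t * \<delta>) + K * mf \<delta>)"
    if "t > 0" "\<delta> > 0" "a \<le> b" for t \<delta> a b
    unfolding N_def
    by (rule induct_bound[OF that(1,2) _ _ that(3)]) (use K that mf_nonneg in auto)
  have "\<forall>t>0. \<exists>L. improper_integral_R (\<lambda>x. cis (t * h x)) L \<and>
            (t < 1 \<longrightarrow> norm L \<le> C * t powr (-1 / (2 + q2))) \<and>
            (t \<ge> 1 \<longrightarrow> norm L \<le> C * t powr (-1 / (2 + q1)))"
  proof (intro allI impI)
    fix t :: real assume t: "t > 0"
    obtain L where L: "improper_integral_R (\<lambda>x. cis (t * h x)) L"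
      "\<And>B. (\<forall>a b. a \<le> b \<longrightarrow> norm (integral {a..b} (\<lambda>x. cis (t * h x))) \<le> B) \<Longrightarrow> norm L \<le> B"
      using improper[OF t] by blast
    have c1: "norm L \<le> C * t powr (-1 / (2 + q2))" if t1: "t < 1"
    proof (rule L(2), intro allI impI)
      fix a b :: real assume ab: "a \<le> b"
      define \<delta> where "\<delta> = t powr (-(1+q2)/(2+q2))"
      have \<delta>0: "\<delta> > 0" unfolding \<delta>_def using t by simp
      have "-(1+q2)/(2+q2) < 0" using q2 by (simp add: divide_neg_pos)
      then have "1 powr (-(1+q2)/(2+q2)) < \<delta>" unfolding \<delta>_def using t t1 by (intro powr_less_mono2_neg) auto
      then have \<delta>1: "\<not> \<delta> \<le> 1" by simp
      have "8 / (t * \<delta>) = 8 * t powr (-1/(2+q2))" unfolding \<delta>_def by (rule pow_alg2[OF t q2])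
      moreover have "mf \<delta> = t powr (-1/(2+q2))"
      proof -
        have "mf \<delta> = \<delta> powr (1/(1+q2))" unfolding mf_def using \<delta>1 by simp
        also have "\<dots> = t powr (-1/(2+q2))" unfolding \<delta>_def by (rule pow_alg3[OF t q2])
        finally show ?thesis .
      qed
      ultimately have "(N + 1) * (8 / (t * \<delta>) + K * mf \<delta>) = C * t powr (-1/(2+q2))"
        unfolding C_def by (simp add: algebra_simps)
      then show "norm (integral {a..b} (\<lambda>x. cis (t * h x))) \<le> C * t powr (-1 / (2 + q2))"
        using gen[OF t \<delta>0 ab] by simp
    qed
    have c2: "norm L \<le> C * t powr (-1 / (2 + q1))" if t1: "t \<ge> 1"
    proof (rule L(2), intro allI impI)
      fix a b :: real assume ab: "a \<le> b"
      define \<delta> where "\<delta> = t powr (-(1+q1)/(2+q1))"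
      have \<delta>0: "\<delta> > 0" unfolding \<delta>_def using t by simp
      have "-(1+q1)/(2+q1) \<le> 0" using q1 by (simp add: divide_nonpos_pos)
      then have "\<delta> \<le> t powr 0" unfolding \<delta>_def using t1 by (intro powr_mono) auto
      then have \<delta>1: "\<delta> \<le> 1" using t by simp
      have q1': "q1 \<ge> 0" using q1 by simp
      have "8 / (t * \<delta>) = 8 * t powr (-1/(2+q1))" unfolding \<delta>_def by (rule pow_alg2[OF t q1'])
      moreover have "mf \<delta> = t powr (-1/(2+q1))"
      proof -
        have "mf \<delta> = \<delta> powr (1/(1+q1))" unfolding mf_def using \<delta>1 by simp
        also have "\<dots> = t powr (-1/(2+q1))" unfolding \<delta>_def by (rule pow_alg3[OF t q1'])
        finally show ?thesis .
      qed
      ultimately have "(N + 1) * (8 / (t * \<delta>) + K * mf \<delta>) = C * t powr (-1/(2+q1))"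
        unfolding C_def by (simp add: algebra_simps)
      then show "norm (integral {a..b} (\<lambda>x. cis (t * h x))) \<le> C * t powr (-1 / (2 + q1))"
        using gen[OF t \<delta>0 ab] by simp
    qed
    show "\<exists>L. improper_integral_R (\<lambda>x. cis (t * h x)) L \<and>
            (t < 1 \<longrightarrow> norm L \<le> C * t powr (-1 / (2 + q2))) \<and>
            (t \<ge> 1 \<longrightarrow> norm L \<le> C * t powr (-1 / (2 + q1)))"
      using L(1) c1 c2 by blast
  qed
  then show ?thesis by blast
qed

end

theorem mainTheorem8:
  fixes h h' h'' :: "real \<Rightarrow> real" and q1 q2 C1 C2 :: real
  assumes d1: "\<And>x. (h has_real_derivative h' x) (at x)"
    and d2: "\<And>x. (h' has_real_derivative h'' x) (at x)"
    and fin: "finite {x. h'' x = 0}"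
    and q1: "q1 > 0"
    and ord: "\<And>\<xi>. h'' \<xi> = 0 \<Longrightarrow>
               \<exists>a>0. \<exists>\<delta>>0. \<forall>x. \<bar>x - \<xi>\<bar> < \<delta> \<longrightarrow> \<bar>h'' x\<bar> \<ge> a * \<bar>x - \<xi>\<bar> powr q1"
    and C1: "C1 > 0" and C2: "C2 > 0" and q2: "q2 \<ge> 0"
    and grow: "\<And>x. \<bar>x\<bar> \<ge> C1 \<Longrightarrow> \<bar>h'' x\<bar> \<ge> C2 * \<bar>x\<bar> powr q2"
  shows "\<exists>C. \<forall>t>0. \<exists>L. improper_integral_R (\<lambda>x. cis (t * h x)) L \<and>
            (t < 1 \<longrightarrow> norm L \<le> C * t powr (-1 / (2 + q2))) \<and>
            (t \<ge> 1 \<longrightarrow> norm L \<le> C * t powr (-1 / (2 + q1)))"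
proof -
  interpret setting h h' h'' q1 q2 C1 C2
    using d1 d2 fin q1 ord C1 C2 q2 grow by unfold_locales
  show ?thesis by (rule final)
qed

end
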